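(* Let $p>1$ and let $w\in N_p$ be a weight that is positive on a set of positive measure. Then the space $ML^p(w)$ is order-continuous if and only if $w\notin L^1(\mathbb{R}^n)$.
   Context: A weight is a non-negative locally integrable function on $\mathbb{R}^n$. $N_p$ is the class of weights with $\int w(x)(1+|x|)^{-np}\,dx<\infty$. $Mf(x)=\sup_{Q\ni x}\frac1{|Q|}\int_Q|f|$ is the Hardy–Littlewood maximal operator, with the supremum over cubes containing $x$. $ML^p(w)$ is the space of measurable $f$ with $\|f\|_{ML^p(w)}:=\|Mf\|_{L^p(w)}<\infty$. A Banach function space $X$ is order-continuous if for every sequence $(f_j)$ in $X$ with $f_j\downarrow0$ a.e., one has $\|f_j\|_X\downarrow0$. *)

theory Defs
  imports "HOL-Analysis.Analysis"
begin

definition cubes :: "'a::euclidean_space set set" where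
  "cubes = {cbox a (a + r *\<^sub>R One) | a r. r > 0}"

definition maximal_fn :: "('a::euclidean_space \<Rightarrow> real) \<Rightarrow> 'a \<Rightarrow> ennreal" where
  "maximal_fn f x = (SUP Q\<in>{Q\<in>cubes. x \<in> Q}.
      (\<integral>\<^sup>+ y\<in>Q. ennreal \<bar>f y\<bar> \<partial>lebesgue) / emeasure lebesgue Q)"

definition ennpowr :: "ennreal \<Rightarrow> real \<Rightarrow> ennreal" where
  "ennpowr t p = (if t = \<infinity> then \<infinity> else ennreal (enn2real t powr p))"

definition weight :: "('a::euclidean_space \<Rightarrow> real) \<Rightarrow> bool" where
  "weight w \<longleftrightarrow> (\<forall>x. 0 \<le> w x) \<and> w \<in> borel_measurable lebesgue \<and>
     (\<forall>K. compact K \<longrightarrow> set_integrable lebesgue K w)"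

definition Np_class :: "real \<Rightarrow> ('a::euclidean_space \<Rightarrow> real) set" where
  "Np_class p = {w. weight w \<and>
     (\<integral>\<^sup>+ x. ennreal (w x * (1 + norm x) powr (- real DIM('a) * p)) \<partial>lebesgue) < \<infinity>}"

definition MLp_integral :: "real \<Rightarrow> ('a::euclidean_space \<Rightarrow> real) \<Rightarrow> ('a \<Rightarrow> real) \<Rightarrow> ennreal" where
  "MLp_integral p w f = (\<integral>\<^sup>+ x. ennpowr (maximal_fn f x) p * ennreal (w x) \<partial>lebesgue)"

definition MLp_space :: "real \<Rightarrow> ('a::euclidean_space \<Rightarrow> real) \<Rightarrow> ('a \<Rightarrow> real) set" where
  "MLp_space p w = {f. f \<in> borel_measurable lebesgue \<and> MLp_integral p w f < \<infinity>}"

definition MLp_norm :: "real \<Rightarrow> ('a::euclidean_space \<Rightarrow> real) \<Rightarrow> ('a \<Rightarrow> real) \<Rightarrow> real" where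
  "MLp_norm p w f = enn2real (MLp_integral p w f) powr (1 / p)"

definition MLp_order_continuous :: "real \<Rightarrow> ('a::euclidean_space \<Rightarrow> real) \<Rightarrow> bool" where
  "MLp_order_continuous p w \<longleftrightarrow>
     (\<forall>f :: nat \<Rightarrow> 'a \<Rightarrow> real.
        (\<forall>j. f j \<in> MLp_space p w) \<longrightarrow>
        (\<forall>j. AE x in lebesgue. \<bar>f (Suc j) x\<bar> \<le> \<bar>f j x\<bar>) \<longrightarrow>
        (AE x in lebesgue. (\<lambda>j. f j x) \<longlonglongrightarrow> 0) \<longrightarrow>
        (\<lambda>j. MLp_norm p w (f j)) \<longlonglongrightarrow> 0)"

end

theory Submission
  imports Defs
begin


lemma cube_measure:
  fixes a :: "'a::euclidean_space"
  assumes "r \<ge> 0"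
  shows "emeasure lebesgue (cbox a (a + r *\<^sub>R One)) = ennreal (r ^ DIM('a))"
  using assms by (simp add: emeasure_completion emeasure_lborel_cbox_eq inner_add_left prod_ennreal)

lemma maximal_fn_ge:
  fixes a :: "'a::euclidean_space"
  assumes "r > 0" "x \<in> cbox a (a + r *\<^sub>R One)"
  shows "(\<integral>\<^sup>+ y\<in>cbox a (a + r *\<^sub>R One). ennreal \<bar>f y\<bar> \<partial>lebesgue) / ennreal (r ^ DIM('a)) \<le> maximal_fn f x"
proof -
  have mem: "cbox a (a + r *\<^sub>R One) \<in> {Q\<in>cubes. x \<in> Q}" using assms unfolding cubes_def by auto
  have "(\<integral>\<^sup>+ y\<in>cbox a (a + r *\<^sub>R One). ennreal \<bar>f y\<bar> \<partial>lebesgue) / emeasure lebesgue (cbox a (a + r *\<^sub>R One)) \<le> maximal_fn f x"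
    unfolding maximal_fn_def using mem by (rule SUP_upper)
  then show ?thesis using cube_measure[of r a] assms(1) by simp
qed

lemma maximal_fn_le:
  fixes x :: "'a::euclidean_space"
  assumes "\<And>a r. r > 0 \<Longrightarrow> x \<in> cbox a (a + r *\<^sub>R One) \<Longrightarrow>
     (\<integral>\<^sup>+ y\<in>cbox a (a + r *\<^sub>R One). ennreal \<bar>f y\<bar> \<partial>lebesgue) / ennreal (r ^ DIM('a)) \<le> c"
  shows "maximal_fn f x \<le> c"
  unfolding maximal_fn_def
proof (rule SUP_least)
  fix Q assume "Q \<in> {Q\<in>cubes. x \<in> Q}"
  then obtain a r where Q: "Q = cbox a (a + r *\<^sub>R One)" "r > 0" "x \<in> Q" unfolding cubes_def by auto
  have "emeasure lebesgue Q = ennreal (r ^ DIM('a))" using Q cube_measure[of r a] by simp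
  then show "(\<integral>\<^sup>+ y\<in>Q. ennreal \<bar>f y\<bar> \<partial>lebesgue) / emeasure lebesgue Q \<le> c"
    using assms[of r a] Q by simp
qed

lemma maximal_fn_mono:
  assumes "AE y in lebesgue. \<bar>g y\<bar> \<le> \<bar>f y\<bar>"
  shows "maximal_fn g x \<le> maximal_fn f x"
  unfolding maximal_fn_def
proof (rule SUP_mono)
  fix Q assume Q: "Q \<in> {Q\<in>cubes. x \<in> Q}"
  have "AE y in lebesgue. ennreal \<bar>g y\<bar> * indicator Q y \<le> ennreal \<bar>f y\<bar> * indicator Q y"
    using assms by eventually_elim (auto simp: indicator_def)
  then have "(\<integral>\<^sup>+ y\<in>Q. ennreal \<bar>g y\<bar> \<partial>lebesgue) \<le> (\<integral>\<^sup>+ y\<in>Q. ennreal \<bar>f y\<bar> \<partial>lebesgue)"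
    by (rule nn_integral_mono_AE)
  then have "(\<integral>\<^sup>+ y\<in>Q. ennreal \<bar>g y\<bar> \<partial>lebesgue) / emeasure lebesgue Q
      \<le> (\<integral>\<^sup>+ y\<in>Q. ennreal \<bar>f y\<bar> \<partial>lebesgue) / emeasure lebesgue Q"
    by (rule divide_right_mono_ennreal)
  then show "\<exists>m\<in>{Q\<in>cubes. x \<in> Q}. (\<integral>\<^sup>+ y\<in>Q. ennreal \<bar>g y\<bar> \<partial>lebesgue) / emeasure lebesgue Q
      \<le> (\<integral>\<^sup>+ y\<in>m. ennreal \<bar>f y\<bar> \<partial>lebesgue) / emeasure lebesgue m"
    using Q by blast
qed

lemma ennpowr_mono:
  assumes "s \<le> t" "p > 0"
  shows "ennpowr s p \<le> ennpowr t p"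
proof (cases "t = \<infinity>")
  case True then show ?thesis by (simp add: ennpowr_def)
next
  case False
  then have "s \<noteq> \<infinity>" using assms top_unique by auto
  have "enn2real s \<le> enn2real t" using assms(1) False by (simp add: enn2real_mono top.not_eq_extremum)
  then have "enn2real s powr p \<le> enn2real t powr p" using assms(2) by (intro powr_mono2) auto
  then show ?thesis using False \<open>s \<noteq> \<infinity>\<close> unfolding ennpowr_def by (simp add: ennreal_leI)
qed

lemma open_sets_lebesgue: "open S \<Longrightarrow> S \<in> sets lebesgue"
  by (simp add: borel_open sets_completionI_sets)

lemma cube_enlarge_mem:
  fixes a :: "'a::euclidean_space"
  assumes "x \<in> cbox a (a + r *\<^sub>R One)" "dist x z < d"
  shows "z \<in> cbox (a - d *\<^sub>R One) (a - d *\<^sub>R One + (r + 2 * d) *\<^sub>R One)"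
  unfolding mem_box
proof
  fix b :: 'a assume b: "b \<in> Basis"
  have "\<bar>(z - x) \<bullet> b\<bar> \<le> norm (z - x)" using b by (rule Basis_le_norm)
  also have "\<dots> = dist x z" by (simp add: dist_norm norm_minus_commute)
  finally have "\<bar>z \<bullet> b - x \<bullet> b\<bar> < d" using assms(2) by (simp add: inner_diff_left)
  moreover have "a \<bullet> b \<le> x \<bullet> b" "x \<bullet> b \<le> a \<bullet> b + r" using assms(1) b by (auto simp: mem_box inner_add_left)
  moreover have "(a - d *\<^sub>R One) \<bullet> b = a \<bullet> b - d" "(a - d *\<^sub>R One + (r + 2 * d) *\<^sub>R One) \<bullet> b = a \<bullet> b - d + (r + 2 * d)"
    using b by (simp_all add: inner_diff_left inner_add_left)
  ultimately show "(a - d *\<^sub>R One) \<bullet> b \<le> z \<bullet> b \<and> z \<bullet> b \<le> (a - d *\<^sub>R One + (r + 2 * d) *\<^sub>R One) \<bullet> b"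
    by (simp add: abs_less_iff)
qed

lemma cube_enlarge_sub:
  fixes a :: "'a::euclidean_space"
  assumes "r \<ge> 0" "d \<ge> 0"
  shows "cbox a (a + r *\<^sub>R One) \<subseteq> cbox (a - d *\<^sub>R One) (a - d *\<^sub>R One + (r + 2 * d) *\<^sub>R One)"
  unfolding subset_box(1) using assms by (simp add: inner_diff_left inner_add_left)

lemma maximal_fn_open:
  fixes f :: "'a::euclidean_space \<Rightarrow> real"
  shows "open {x. y < maximal_fn f x}"
  unfolding open_contains_ball
proof (intro ballI)
  fix x assume "x \<in> {x. y < maximal_fn f x}"
  then have "y < maximal_fn f x" by simp
  then have "\<exists>Q\<in>{Q\<in>cubes. x \<in> Q}. y < (\<integral>\<^sup>+ y\<in>Q. ennreal \<bar>f y\<bar> \<partial>lebesgue) / emeasure lebesgue Q"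
    unfolding maximal_fn_def by (simp only: less_SUP_iff)
  then obtain Q where Q: "Q \<in> {Q\<in>cubes. x \<in> Q}" and yQ: "y < (\<integral>\<^sup>+ y\<in>Q. ennreal \<bar>f y\<bar> \<partial>lebesgue) / emeasure lebesgue Q"
    by blast
  then obtain a r where Qa: "Q = cbox a (a + r *\<^sub>R One)" "r > 0" "x \<in> Q" unfolding cubes_def by auto
  define I where "I = (\<integral>\<^sup>+ y\<in>Q. ennreal \<bar>f y\<bar> \<partial>lebesgue)"
  have yI: "y < I / ennreal (r ^ DIM('a))" using yQ Qa cube_measure[of r a] by (simp add: I_def)
  have "\<exists>d>0. y < I / ennreal ((r + 2 * d) ^ DIM('a))"
  proof (cases "I = \<infinity>")
    case True
    then show ?thesis using yI Qa(2)
      by (intro exI[of _ 1]) (simp add: ennreal_top_divide)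
  next
    case False
    then obtain I' where I': "I = ennreal I'" "I' \<ge> 0" by (cases I) auto
    have "y < \<infinity>" using order.strict_trans2[OF yI top_greatest] by simp
    then obtain y' where y': "y = ennreal y'" "y' \<ge> 0" by (cases y) auto
    have lt: "y' < I' / r ^ DIM('a)"
      using yI Qa(2) I' y' by (simp add: divide_ennreal ennreal_less_iff)
    have "((\<lambda>d. I' / (r + 2 * d) ^ DIM('a)) \<longlongrightarrow> I' / (r + 2 * 0) ^ DIM('a)) (at 0)"
      using Qa(2) by (intro tendsto_intros) auto
    then have "\<forall>\<^sub>F d in at (0::real). y' < I' / (r + 2 * d) ^ DIM('a)"
      using lt by (intro order_tendstoD(1)) auto
    then obtain e where e: "e > 0" "\<And>d. 0 < dist d 0 \<Longrightarrow> dist d 0 < e \<Longrightarrow> y' < I' / (r + 2 * d) ^ DIM('a)"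
      unfolding eventually_at by auto
    have "y' < I' / (r + 2 * (e/2)) ^ DIM('a)" using e(1) by (intro e(2)) auto
    then show ?thesis using e Qa(2) I' y'
      by (intro exI[of _ "e/2"]) (simp add: divide_ennreal ennreal_less_iff)
  qed
  then obtain d where d: "d > 0" "y < I / ennreal ((r + 2 * d) ^ DIM('a))" by auto
  show "\<exists>e>0. ball x e \<subseteq> {x. y < maximal_fn f x}"
  proof (intro exI[of _ d] conjI subsetI)
    fix z assume z: "z \<in> ball x d"
    define a' where "a' = a - d *\<^sub>R One"
    define Q' where "Q' = cbox a' (a' + (r + 2 * d) *\<^sub>R One)"
    have sub: "Q \<subseteq> Q'"
      unfolding Q'_def a'_def Qa(1) using Qa(2) d(1) by (intro cube_enlarge_sub) auto
    have zQ: "z \<in> Q'"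
      unfolding Q'_def a'_def using Qa z by (intro cube_enlarge_mem[of x]) auto
    have pos: "r + 2 * d > 0" using d Qa(2) by simp
    have m1: "(\<integral>\<^sup>+ y\<in>Q'. ennreal \<bar>f y\<bar> \<partial>lebesgue) / ennreal ((r + 2 * d) ^ DIM('a)) \<le> maximal_fn f z"
      using pos zQ unfolding Q'_def by (rule maximal_fn_ge)
    have "I \<le> (\<integral>\<^sup>+ y\<in>Q'. ennreal \<bar>f y\<bar> \<partial>lebesgue)"
      unfolding I_def by (intro nn_integral_mono) (use sub in \<open>auto simp: indicator_def\<close>)
    then have "I / ennreal ((r + 2 * d) ^ DIM('a)) \<le> (\<integral>\<^sup>+ y\<in>Q'. ennreal \<bar>f y\<bar> \<partial>lebesgue) / ennreal ((r + 2 * d) ^ DIM('a))"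
      by (rule divide_right_mono_ennreal)
    then have "y < maximal_fn f z" using d(2) m1 by (meson order.strict_trans2 order.trans)
    then show "z \<in> {x. y < maximal_fn f x}" by simp
  qed (rule d(1))
qed

lemma maximal_fn_measurable:
  fixes f :: "'a::euclidean_space \<Rightarrow> real"
  shows "maximal_fn f \<in> borel_measurable lebesgue"
  by (rule borel_measurableI_greater) (simp add: open_sets_lebesgue maximal_fn_open)



lemma borel_measurable_cbox_lebesgue: "cbox a b \<in> sets lebesgue"
  by (simp add: sets_completionI_sets)

lemma weight_meas: "weight w \<Longrightarrow> w \<in> borel_measurable lebesgue"
  unfolding weight_def by simp

lemma weight_nonneg: "weight w \<Longrightarrow> 0 \<le> w x"
  unfolding weight_def by simp

lemma int_w_pos:
  fixes w :: "'a::euclidean_space \<Rightarrow> real"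
  assumes "weight w" "emeasure lebesgue {x. w x > 0} > 0"
  shows "(\<integral>\<^sup>+ x. ennreal (w x) \<partial>lebesgue) > 0"
proof (rule ccontr)
  assume "\<not> ?thesis"
  then have "(\<integral>\<^sup>+ x. ennreal (w x) \<partial>lebesgue) = 0" by simp
  moreover have wm: "w \<in> borel_measurable lebesgue" using assms(1) by (rule weight_meas)
  ultimately have "AE x in lebesgue. ennreal (w x) = 0"
    by (subst nn_integral_0_iff_AE[symmetric]) auto
  then have "AE x in lebesgue. x \<notin> {x. w x > 0}"
    by eventually_elim (simp add: ennreal_eq_0_iff)
  moreover have "{x. w x \<in> {0<..}} \<in> sets lebesgue" by (rule lebesgue_measurable_vimage_borel[OF wm]) simp
  then have "{x. w x > 0} \<in> sets lebesgue" by simp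
  ultimately have "{x. w x > 0} \<in> null_sets lebesgue" by (subst AE_iff_null_sets) auto
  then show False using assms(2) by auto
qed

lemma ennpowr_one: "ennpowr 1 p = 1"
  unfolding ennpowr_def by simp

lemma ennpowr_ennreal: "x \<ge> 0 \<Longrightarrow> ennpowr (ennreal x) p = ennreal (x powr p)"
  unfolding ennpowr_def by simp

definition orth :: "nat \<Rightarrow> 'a::euclidean_space set" where
  "orth j = {y. \<forall>b\<in>Basis. real j \<le> y \<bullet> b}"

lemma orth_sets: "orth j \<in> sets lebesgue"
proof -
  have "orth j = (\<Inter>b\<in>Basis. {y. real j \<le> y \<bullet> b})" unfolding orth_def by auto
  moreover have "closed (\<Inter>b\<in>Basis. {y::'a. real j \<le> y \<bullet> b})"
    by (intro closed_INT ballI closed_Collect_le continuous_intros)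
  then have "(\<Inter>b\<in>Basis. {y::'a. real j \<le> y \<bullet> b}) \<in> sets borel" by (rule borel_closed)
  then have "(\<Inter>b\<in>Basis. {y::'a. real j \<le> y \<bullet> b}) \<in> sets lebesgue" by (simp add: sets_completionI_sets)
  then show ?thesis by (simp only: \<open>orth j = _\<close>)
qed

lemma maximal_orth_le: "maximal_fn (indicator (orth j)) x \<le> 1"
proof (rule maximal_fn_le)
  fix a :: 'a and r :: real assume r: "r > 0"
  have "(\<integral>\<^sup>+ y\<in>cbox a (a + r *\<^sub>R One). ennreal \<bar>indicator (orth j) y\<bar> \<partial>lebesgue)
      \<le> (\<integral>\<^sup>+ y. indicator (cbox a (a + r *\<^sub>R One)) y \<partial>lebesgue)"
    by (intro nn_integral_mono) (simp add: indicator_def)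
  also have "\<dots> = ennreal (r ^ DIM('a))"
    using r by (simp only: nn_integral_indicator[OF borel_measurable_cbox_lebesgue] cube_measure[OF less_imp_le[OF r]])
  finally have "(\<integral>\<^sup>+ y\<in>cbox a (a + r *\<^sub>R One). ennreal \<bar>indicator (orth j) y\<bar> \<partial>lebesgue) / ennreal (r ^ DIM('a))
     \<le> ennreal (r ^ DIM('a)) / ennreal (r ^ DIM('a))"
    by (rule divide_right_mono_ennreal)
  also have "\<dots> = 1" using r by (intro ennreal_divide_self) auto
  finally show "(\<integral>\<^sup>+ y\<in>cbox a (a + r *\<^sub>R One). ennreal \<bar>indicator (orth j) y\<bar> \<partial>lebesgue) / ennreal (r ^ DIM('a)) \<le> 1" .
qed

lemma maximal_orth_ge:
  fixes x :: "'a::euclidean_space"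
  shows "ennreal ((1/2) ^ DIM('a)) \<le> maximal_fn (indicator (orth j)) x"
proof -
  define r where "r = 2 * (real j + (\<Sum>b\<in>Basis. \<bar>x \<bullet> b\<bar>) + 1)"
  have r: "r > 0" unfolding r_def by (simp add: add_nonneg_pos sum_nonneg)
  define c where "c = x + (r/2) *\<^sub>R One"
  have xQ: "x \<in> cbox x (x + r *\<^sub>R One)" using r by (simp add: mem_box inner_add_left)
  have sub: "cbox c (c + (r/2) *\<^sub>R One) \<subseteq> orth j"
  proof
    fix y assume y: "y \<in> cbox c (c + (r/2) *\<^sub>R One)"
    show "y \<in> orth j" unfolding orth_def
    proof (intro CollectI ballI)
      fix b :: 'a assume b: "b \<in> Basis"
      have "\<bar>x \<bullet> b\<bar> \<le> (\<Sum>b\<in>Basis. \<bar>x \<bullet> b\<bar>)" using b by (intro member_le_sum) auto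
      moreover have "c \<bullet> b \<le> y \<bullet> b" using y b by (simp add: mem_box)
      moreover have "c \<bullet> b = x \<bullet> b + r / 2" using b by (simp add: c_def inner_add_left)
      moreover have "r / 2 = real j + (\<Sum>b\<in>Basis. \<bar>x \<bullet> b\<bar>) + 1" unfolding r_def by simp
      ultimately show "real j \<le> y \<bullet> b" by (simp add: abs_le_iff)
    qed
  qed
  have sub2: "cbox c (c + (r/2) *\<^sub>R One) \<subseteq> cbox x (x + r *\<^sub>R One)"
    unfolding subset_box(1) using r by (simp add: c_def inner_add_left)
  have "ennreal ((r/2) ^ DIM('a)) = (\<integral>\<^sup>+ y. indicator (cbox c (c + (r/2) *\<^sub>R One)) y \<partial>lebesgue)"
    using r by (simp only: nn_integral_indicator[OF borel_measurable_cbox_lebesgue] cube_measure[of "r/2"])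
  also have "\<dots> \<le> (\<integral>\<^sup>+ y\<in>cbox x (x + r *\<^sub>R One). ennreal \<bar>indicator (orth j) y\<bar> \<partial>lebesgue)"
    using sub sub2 by (intro nn_integral_mono) (auto simp: indicator_def subset_iff)
  finally have "ennreal ((r/2) ^ DIM('a)) / ennreal (r ^ DIM('a)) \<le>
     (\<integral>\<^sup>+ y\<in>cbox x (x + r *\<^sub>R One). ennreal \<bar>indicator (orth j) y\<bar> \<partial>lebesgue) / ennreal (r ^ DIM('a))"
    by (rule divide_right_mono_ennreal)
  also have "\<dots> \<le> maximal_fn (indicator (orth j)) x" using r xQ by (rule maximal_fn_ge)
  finally have *: "ennreal ((r/2) ^ DIM('a)) / ennreal (r ^ DIM('a)) \<le> maximal_fn (indicator (orth j)) x" .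
  have "ennreal ((r/2) ^ DIM('a)) / ennreal (r ^ DIM('a)) = ennreal ((r/2) ^ DIM('a) / r ^ DIM('a))"
    using r by (intro divide_ennreal) auto
  also have "(r/2) ^ DIM('a) / r ^ DIM('a) = (1/2) ^ DIM('a)"
    using r by (simp add: power_divide)
  finally show ?thesis using * by simp
qed

lemma easy_direction:
  fixes p :: real and w :: "'a::euclidean_space \<Rightarrow> real"
  assumes p: "p > 1" and w: "weight w"
    and pos: "emeasure lebesgue {x. w x > 0} > 0"
    and int: "integrable lebesgue w"
  shows "\<not> MLp_order_continuous p w"
proof
  assume oc: "MLp_order_continuous p w"
  define f where "f = (\<lambda>j::nat. indicator (orth j) :: 'a \<Rightarrow> real)"
  define W where "W = (\<integral>\<^sup>+ x. ennreal (w x) \<partial>lebesgue)"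
  have Wfin: "W < \<infinity>"
  proof -
    have "(\<integral>\<^sup>+ x. ennreal (norm (w x)) \<partial>lebesgue) < \<infinity>" using int by (simp add: integrable_iff_bounded)
    then show ?thesis unfolding W_def using weight_nonneg[OF w] by simp
  qed
  have Wpos: "W > 0" unfolding W_def using w pos by (rule int_w_pos)
  define c where "c = ennreal (((1/2) ^ DIM('a)) powr p)"
  have cpos: "c > 0" unfolding c_def by simp
  have ub: "MLp_integral p w (f j) \<le> W" for j
    unfolding MLp_integral_def W_def
  proof (intro nn_integral_mono)
    fix x
    have "ennpowr (maximal_fn (f j) x) p \<le> ennpowr 1 p"
      using p unfolding f_def by (intro ennpowr_mono maximal_orth_le) auto
    then have "ennpowr (maximal_fn (f j) x) p \<le> 1" by (simp add: ennpowr_one)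
    then show "ennpowr (maximal_fn (f j) x) p * ennreal (w x) \<le> ennreal (w x)"
      using mult_right_mono[of _ 1 "ennreal (w x)"] by simp
  qed
  have lb: "c * W \<le> MLp_integral p w (f j)" for j
  proof -
    have "c * W = (\<integral>\<^sup>+ x. c * ennreal (w x) \<partial>lebesgue)"
      unfolding W_def using weight_meas[OF w] by (simp add: nn_integral_cmult)
    also have "\<dots> \<le> MLp_integral p w (f j)"
      unfolding MLp_integral_def
    proof (intro nn_integral_mono mult_right_mono)
      fix x
      have "ennpowr (ennreal ((1/2) ^ DIM('a))) p \<le> ennpowr (maximal_fn (f j) x) p"
        using p unfolding f_def by (intro ennpowr_mono maximal_orth_ge) auto
      then show "c \<le> ennpowr (maximal_fn (f j) x) p" unfolding c_def by (simp add: ennpowr_ennreal)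
    qed simp
    finally show ?thesis .
  qed
  have space: "f j \<in> MLp_space p w" for j
    unfolding MLp_space_def using ub[of j] Wfin borel_measurable_indicator[OF orth_sets[of j]]
    by (auto simp: f_def intro: le_less_trans)
  have mono: "AE x in lebesgue. \<bar>f (Suc j) x\<bar> \<le> \<bar>f j x\<bar>" for j
    by (intro AE_I2) (auto simp: f_def orth_def indicator_def)
  have lim: "AE x in lebesgue. (\<lambda>j. f j x) \<longlonglongrightarrow> 0"
  proof (intro AE_I2 tendsto_eventually)
    fix x :: 'a
    obtain b :: 'a where b: "b \<in> Basis" using nonempty_Basis by blast
    show "\<forall>\<^sub>F j in sequentially. f j x = 0"
      unfolding eventually_sequentially
    proof (intro exI allI impI)
      fix j assume "nat (ceiling (x \<bullet> b)) + 1 \<le> j"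
      then have "x \<bullet> b < real j" by linarith
      then have "x \<notin> orth j" using b unfolding orth_def by force
      then show "f j x = 0" by (simp add: f_def)
    qed
  qed
  have tend: "(\<lambda>j. MLp_norm p w (f j)) \<longlonglongrightarrow> 0"
    using oc space mono lim unfolding MLp_order_continuous_def by blast
  define L where "L = enn2real (c * W) powr (1/p)"
  have cW: "c * W \<noteq> 0" "c * W < \<infinity>"
    using cpos Wpos Wfin c_def by (auto simp: ennreal_mult_less_top)
  have Lpos: "L > 0" unfolding L_def using cW
    by (simp add: enn2real_eq_0_iff top.not_eq_extremum)
  have "MLp_norm p w (f j) \<ge> L" for j
  proof -
    have "enn2real (c * W) \<le> enn2real (MLp_integral p w (f j))"
      using lb[of j] ub[of j] Wfin by (intro enn2real_mono) auto
    then show ?thesis unfolding L_def MLp_norm_def using p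
      by (intro powr_mono2) auto
  qed
  moreover have "\<forall>\<^sub>F j in sequentially. MLp_norm p w (f j) < L"
    using tend Lpos by (intro order_tendstoD(2)) auto
  ultimately show False
    by (metis (mono_tags, lifting) eventually_sequentially le_refl not_le)
qed



lemma emeasure_UN_count_le:
  assumes C: "countable C" and X: "\<And>i. i \<in> C \<Longrightarrow> X i \<in> sets M"
  shows "emeasure M (\<Union>i\<in>C. X i) \<le> (\<integral>\<^sup>+ i. emeasure M (X i) \<partial>count_space C)"
proof -
  have meas: "(\<Union>i\<in>C. X i) \<in> sets M" using C X by (intro sets.countable_UN'') auto
  have "emeasure M (\<Union>i\<in>C. X i) = (\<integral>\<^sup>+ x. indicator (\<Union>i\<in>C. X i) x \<partial>M)"
    by (rule nn_integral_indicator[OF meas, symmetric])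
  also have "\<dots> \<le> (\<integral>\<^sup>+ x. (\<integral>\<^sup>+ i. indicator (X i) x \<partial>count_space C) \<partial>M)"
  proof (rule nn_integral_mono)
    fix x
    show "indicator (\<Union>i\<in>C. X i) x \<le> (\<integral>\<^sup>+ i. indicator (X i) x \<partial>count_space C)"
    proof (cases "x \<in> (\<Union>i\<in>C. X i)")
      case True
      then obtain j where j: "j \<in> C" "x \<in> X j" by auto
      have "(\<integral>\<^sup>+ i. indicator (X i) x * indicator {j} i \<partial>count_space C) \<le> (\<integral>\<^sup>+ i. indicator (X i) x \<partial>count_space C)"
        by (intro nn_integral_mono) (simp add: indicator_def)
      moreover have "(\<integral>\<^sup>+ i. indicator (X i) x * indicator {j} i \<partial>count_space C) = indicator (X j) x * emeasure (count_space C) {j}"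
        using j by (intro nn_integral_indicator_singleton) auto
      moreover have "emeasure (count_space C) {j} = 1" using j by (simp add: emeasure_count_space_finite)
      ultimately show ?thesis using True j by simp
    next
      case False
      then show ?thesis by simp
    qed
  qed
  also have "\<dots> = (\<integral>\<^sup>+ i. (\<integral>\<^sup>+ x. indicator (X i) x \<partial>M) \<partial>count_space C)"
    using C X by (intro nn_integral_count_space_nn_integral) auto
  also have "\<dots> = (\<integral>\<^sup>+ i. emeasure M (X i) \<partial>count_space C)"
    using X by (intro nn_integral_cong) (simp add: nn_integral_indicator)
  finally show ?thesis .
qed

lemma cube_sub_cball:
  fixes a :: "'a::euclidean_space"
  assumes "r \<ge> 0"
  shows "cbox a (a + r *\<^sub>R One) \<subseteq> cball (a + (r/2) *\<^sub>R One) (real DIM('a) * r / 2)"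
proof
  fix y assume y: "y \<in> cbox a (a + r *\<^sub>R One)"
  have "dist (a + (r/2) *\<^sub>R One) y = norm ((a + (r/2) *\<^sub>R One) - y)" by (simp add: dist_norm)
  also have "\<dots> \<le> (\<Sum>b\<in>Basis. \<bar>((a + (r/2) *\<^sub>R One) - y) \<bullet> b\<bar>)" by (rule norm_le_l1)
  also have "\<dots> \<le> (\<Sum>b\<in>(Basis::'a set). r / 2)"
  proof (rule sum_mono)
    fix b :: 'a assume b: "b \<in> Basis"
    have "a \<bullet> b \<le> y \<bullet> b" "y \<bullet> b \<le> a \<bullet> b + r" using y b by (auto simp: mem_box inner_add_left)
    moreover have "((a + (r/2) *\<^sub>R One) - y) \<bullet> b = a \<bullet> b + r/2 - y \<bullet> b"
      using b by (simp add: inner_diff_left inner_add_left)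
    ultimately show "\<bar>((a + (r/2) *\<^sub>R One) - y) \<bullet> b\<bar> \<le> r / 2" by (simp only: abs_le_iff) linarith
  qed
  also have "\<dots> = real DIM('a) * r / 2" by simp
  finally show "y \<in> cball (a + (r/2) *\<^sub>R One) (real DIM('a) * r / 2)" by (simp add: mem_cball)
qed

lemma cball_measure_le:
  fixes c :: "'a::euclidean_space"
  assumes "\<rho> \<ge> 0"
  shows "emeasure lebesgue (cball c \<rho>) \<le> ennreal ((2 * \<rho>) ^ DIM('a))"
proof -
  have "cball c \<rho> \<subseteq> cbox (c - \<rho> *\<^sub>R One) (c - \<rho> *\<^sub>R One + (2 * \<rho>) *\<^sub>R One)"
  proof
    fix y assume y: "y \<in> cball c \<rho>"
    show "y \<in> cbox (c - \<rho> *\<^sub>R One) (c - \<rho> *\<^sub>R One + (2 * \<rho>) *\<^sub>R One)"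
      unfolding mem_box
    proof
      fix b :: 'a assume b: "b \<in> Basis"
      have "\<bar>(y - c) \<bullet> b\<bar> \<le> norm (y - c)" using b by (rule Basis_le_norm)
      also have "\<dots> \<le> \<rho>" using y by (simp add: dist_norm norm_minus_commute mem_cball)
      finally have "\<bar>y \<bullet> b - c \<bullet> b\<bar> \<le> \<rho>" by (simp add: inner_diff_left)
      moreover have "(c - \<rho> *\<^sub>R One) \<bullet> b = c \<bullet> b - \<rho>" "(c - \<rho> *\<^sub>R One + (2 * \<rho>) *\<^sub>R One) \<bullet> b = c \<bullet> b - \<rho> + 2 * \<rho>"
        using b by (simp_all add: inner_diff_left inner_add_left)
      ultimately show "(c - \<rho> *\<^sub>R One) \<bullet> b \<le> y \<bullet> b \<and> y \<bullet> b \<le> (c - \<rho> *\<^sub>R One + (2 * \<rho>) *\<^sub>R One) \<bullet> b"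
        by (simp add: abs_le_iff)
    qed
  qed
  then have "emeasure lebesgue (cball c \<rho>) \<le> emeasure lebesgue (cbox (c - \<rho> *\<^sub>R One) (c - \<rho> *\<^sub>R One + (2 * \<rho>) *\<^sub>R One))"
    by (intro emeasure_mono borel_measurable_cbox_lebesgue)
  also have "\<dots> = ennreal ((2 * \<rho>) ^ DIM('a))" using assms by (intro cube_measure) simp
  finally show ?thesis .
qed


lemma less_maximal_fn_E:
  fixes g :: "'a::euclidean_space \<Rightarrow> real"
  assumes "y < maximal_fn g x"
  obtains a r where "r > 0" "x \<in> cbox a (a + r *\<^sub>R One)"
    "y * ennreal (r ^ DIM('a)) < (\<integral>\<^sup>+ z\<in>cbox a (a + r *\<^sub>R One). ennreal \<bar>g z\<bar> \<partial>lebesgue)"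
proof -
  have "\<exists>Q\<in>{Q\<in>cubes. x \<in> Q}. y < (\<integral>\<^sup>+ z\<in>Q. ennreal \<bar>g z\<bar> \<partial>lebesgue) / emeasure lebesgue Q"
    using assms unfolding maximal_fn_def by (simp only: less_SUP_iff)
  then obtain Q where Q: "Q \<in> {Q\<in>cubes. x \<in> Q}" and yQ: "y < (\<integral>\<^sup>+ z\<in>Q. ennreal \<bar>g z\<bar> \<partial>lebesgue) / emeasure lebesgue Q"
    by blast
  then obtain a r where Qa: "Q = cbox a (a + r *\<^sub>R One)" "r > 0" "x \<in> Q" unfolding cubes_def by auto
  define I where "I = (\<integral>\<^sup>+ z\<in>Q. ennreal \<bar>g z\<bar> \<partial>lebesgue)"
  define m where "m = ennreal (r ^ DIM('a))"
  have m: "m \<noteq> 0" "m \<noteq> \<infinity>" using Qa(2) unfolding m_def by auto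
  have yI: "y < I / m" using yQ Qa cube_measure[of r a] by (simp add: I_def m_def)
  have "y * m < I"
  proof (rule ccontr)
    assume "\<not> y * m < I"
    then have "I \<le> y * m" by simp
    then have "I / m \<le> y * m / m" by (rule divide_right_mono_ennreal)
    also have "\<dots> = y" using m by (simp add: mult_divide_eq_ennreal)
    finally show False using yI by simp
  qed
  then show ?thesis using that Qa unfolding I_def m_def by blast
qed

lemma weak_type:
  fixes g :: "'a::euclidean_space \<Rightarrow> real" and t :: real
  assumes g: "g \<in> borel_measurable lebesgue" and t: "t > 0"
  shows "\<exists>E\<in>sets lebesgue. {x. ennreal t < maximal_fn g x} \<subseteq> E \<and>
      ennreal t * emeasure lebesgue E \<le> ennreal ((5 * real DIM('a)) ^ DIM('a)) * (\<integral>\<^sup>+ x. ennreal \<bar>g x\<bar> \<partial>lebesgue)"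
proof (cases "(\<integral>\<^sup>+ x. ennreal \<bar>g x\<bar> \<partial>lebesgue) = \<infinity>")
  case True
  have "ennreal ((5 * real DIM('a)) ^ DIM('a)) \<noteq> 0" by simp
  then have "ennreal ((5 * real DIM('a)) ^ DIM('a)) * \<infinity> = \<infinity>" by (simp add: ennreal_mult_top)
  then show ?thesis using True by (intro bexI[of _ UNIV]) auto
next
  case False
  define n where "n = DIM('a)"
  have n: "n > 0" unfolding n_def by simp
  define G where "G = enn2real (\<integral>\<^sup>+ x. ennreal \<bar>g x\<bar> \<partial>lebesgue)"
  have G: "(\<integral>\<^sup>+ x. ennreal \<bar>g x\<bar> \<partial>lebesgue) = ennreal G" "G \<ge> 0"
    using False unfolding G_def by (auto simp: top.not_eq_extremum)
  define Qc where "Qc = (\<lambda>i::'a \<times> real. cbox (fst i) (fst i + snd i *\<^sub>R One))"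
  define Ii where "Ii = (\<lambda>i. \<integral>\<^sup>+ y\<in>Qc i. ennreal \<bar>g y\<bar> \<partial>lebesgue)"
  define Ks where "Ks = {i. snd i > 0 \<and> ennreal t * ennreal (snd i ^ n) < Ii i}"
  define ctr where "ctr = (\<lambda>i::'a \<times> real. fst i + (snd i / 2) *\<^sub>R One)"
  define rad where "rad = (\<lambda>i::'a \<times> real. real n * snd i / 2)"
  define B where "B = real n * max 1 (G / t) / 2"
  have IleG: "Ii i \<le> ennreal G" for i
  proof -
    have "Ii i \<le> (\<integral>\<^sup>+ x. ennreal \<bar>g x\<bar> \<partial>lebesgue)"
      unfolding Ii_def by (intro nn_integral_mono) (simp add: indicator_def)
    then show ?thesis using G by simp
  qed
  have rbound: "0 < rad i \<and> rad i \<le> B" if i: "i \<in> Ks" for i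
  proof -
    have r: "snd i > 0" and lt: "ennreal t * ennreal (snd i ^ n) < Ii i" using i unfolding Ks_def by auto
    have eq: "ennreal (t * snd i ^ n) = ennreal t * ennreal (snd i ^ n)"
      using t r by (intro ennreal_mult) auto
    have "ennreal (t * snd i ^ n) < ennreal G"
      unfolding eq using lt IleG[of i] by (rule order.strict_trans2)
    moreover have "0 \<le> t * snd i ^ n" using t r by simp
    ultimately have "t * snd i ^ n < G" by (simp add: ennreal_less_iff)
    then have rn: "snd i ^ n < G / t" using t by (simp add: field_simps)
    have "snd i \<le> max 1 (G / t)"
    proof (cases "snd i \<le> 1")
      case False
      then have "snd i \<le> snd i ^ n" using n by (intro self_le_power) auto
      then show ?thesis using rn by simp
    qed simp
    then have "real n * snd i \<le> real n * max 1 (G / t)" by (rule mult_left_mono) simp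
    then have "real n * snd i / 2 \<le> real n * max 1 (G / t) / 2" by (simp add: divide_right_mono)
    moreover have "0 < real n * snd i / 2" using r n by simp
    ultimately show ?thesis unfolding rad_def B_def by simp
  qed
  have cover: "{x. ennreal t < maximal_fn g x} \<subseteq> (\<Union>i\<in>Ks. cball (ctr i) (rad i))"
  proof
    fix x assume "x \<in> {x. ennreal t < maximal_fn g x}"
    then have "ennreal t < maximal_fn g x" by simp
    then obtain a r where ar: "r > 0" "x \<in> cbox a (a + r *\<^sub>R One)"
      "ennreal t * ennreal (r ^ DIM('a)) < (\<integral>\<^sup>+ z\<in>cbox a (a + r *\<^sub>R One). ennreal \<bar>g z\<bar> \<partial>lebesgue)"
      by (rule less_maximal_fn_E)
    have "(a, r) \<in> Ks" using ar unfolding Ks_def Ii_def Qc_def n_def by simp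
    moreover have "cbox a (a + r *\<^sub>R One) \<subseteq> cball (a + (r/2) *\<^sub>R One) (real DIM('a) * r / 2)"
      using ar(1) by (intro cube_sub_cball) simp
    then have "x \<in> cball (a + (r/2) *\<^sub>R One) (real DIM('a) * r / 2)" using ar(2) by blast
    then have "x \<in> cball (ctr (a, r)) (rad (a, r))" unfolding ctr_def rad_def n_def by simp
    ultimately show "x \<in> (\<Union>i\<in>Ks. cball (ctr i) (rad i))" by blast
  qed
  obtain C where C: "countable C" "C \<subseteq> Ks"
    and disj: "pairwise (\<lambda>i j. disjnt (cball (ctr i) (rad i)) (cball (ctr j) (rad j))) C"
    and cov: "{x. ennreal t < maximal_fn g x} \<subseteq> (\<Union>i\<in>C. cball (ctr i) (5 * rad i))"
    by (rule Vitali_covering_lemma_cballs[OF cover rbound])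
  define E where "E = (\<Union>i\<in>C. cball (ctr i) (5 * rad i))"
  have cball_sets: "cball c e \<in> sets lebesgue" for c :: 'a and e
    by (simp add: borel_closed sets_completionI_sets)
  have Esets: "E \<in> sets lebesgue" unfolding E_def using C(1) cball_sets
    by (intro sets.countable_UN'') auto
  define K where "K = ennreal ((5 * real n) ^ n)"
  define S where "S = (\<integral>\<^sup>+ i. ennreal (snd i ^ n) \<partial>count_space C)"
  have "emeasure lebesgue E \<le> (\<integral>\<^sup>+ i. emeasure lebesgue (cball (ctr i) (5 * rad i)) \<partial>count_space C)"
    unfolding E_def using C(1) cball_sets by (rule emeasure_UN_count_le)
  also have "\<dots> \<le> (\<integral>\<^sup>+ i. K * ennreal (snd i ^ n) \<partial>count_space C)"
  proof (rule nn_integral_mono)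
    fix i assume "i \<in> space (count_space C)"
    then have i: "i \<in> Ks" using C(2) by auto
    then have r: "snd i > 0" unfolding Ks_def by simp
    have "emeasure lebesgue (cball (ctr i) (5 * rad i)) \<le> ennreal ((2 * (5 * rad i)) ^ DIM('a))"
      using r n by (intro cball_measure_le) (simp add: rad_def)
    also have "2 * (5 * rad i) = (5 * real n) * snd i" unfolding rad_def by simp
    also have "((5 * real n) * snd i) ^ DIM('a) = (5 * real n) ^ n * snd i ^ n"
      unfolding n_def by (rule power_mult_distrib)
    finally show "emeasure lebesgue (cball (ctr i) (5 * rad i)) \<le> K * ennreal (snd i ^ n)"
      unfolding K_def using r by (simp add: ennreal_mult)
  qed
  also have "\<dots> = K * S" unfolding S_def by (rule nn_integral_cmult) simp
  finally have EKS: "emeasure lebesgue E \<le> K * S" .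
  define \<nu> where "\<nu> = density lebesgue (\<lambda>y. ennreal \<bar>g y\<bar>)"
  have gm: "(\<lambda>y. ennreal \<bar>g y\<bar>) \<in> borel_measurable lebesgue" using g by measurable
  have Qsets: "Qc i \<in> sets lebesgue" for i unfolding Qc_def by (rule borel_measurable_cbox_lebesgue)
  have nuQ: "emeasure \<nu> (Qc i) = Ii i" for i
    unfolding \<nu>_def Ii_def using gm Qsets by (simp add: emeasure_density)
  have dfam: "disjoint_family_on Qc C"
    unfolding disjoint_family_on_def
  proof (intro ballI impI)
    fix i j assume ij: "i \<in> C" "j \<in> C" "i \<noteq> j"
    then have "disjnt (cball (ctr i) (rad i)) (cball (ctr j) (rad j))"
      using disj unfolding pairwise_def by blast
    moreover have "Qc k \<subseteq> cball (ctr k) (rad k)" if "k \<in> C" for k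
    proof -
      have "snd k > 0" using that C(2) unfolding Ks_def by auto
      then show ?thesis unfolding Qc_def ctr_def rad_def n_def by (intro cube_sub_cball) simp
    qed
    ultimately show "Qc i \<inter> Qc j = {}" using ij unfolding disjnt_def by blast
  qed
  have "ennreal t * S = (\<integral>\<^sup>+ i. ennreal t * ennreal (snd i ^ n) \<partial>count_space C)"
    unfolding S_def by (rule nn_integral_cmult[symmetric]) simp
  also have "\<dots> \<le> (\<integral>\<^sup>+ i. Ii i \<partial>count_space C)"
  proof (rule nn_integral_mono)
    fix i assume "i \<in> space (count_space C)"
    then have "i \<in> Ks" using C(2) by auto
    then show "ennreal t * ennreal (snd i ^ n) \<le> Ii i" unfolding Ks_def by (simp add: less_imp_le)
  qed
  also have "\<dots> = (\<integral>\<^sup>+ i. emeasure \<nu> (Qc i) \<partial>count_space C)" by (simp add: nuQ)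
  also have "\<dots> = emeasure \<nu> (\<Union>i\<in>C. Qc i)"
    using C(1) dfam Qsets unfolding \<nu>_def by (intro emeasure_UN_countable[symmetric]) auto
  also have "\<dots> \<le> emeasure \<nu> (space \<nu>)" by (rule emeasure_space)
  also have "\<dots> = (\<integral>\<^sup>+ x. ennreal \<bar>g x\<bar> \<partial>lebesgue)"
    unfolding \<nu>_def using gm by (simp add: emeasure_density)
  finally have tS: "ennreal t * S \<le> (\<integral>\<^sup>+ x. ennreal \<bar>g x\<bar> \<partial>lebesgue)" .
  have "ennreal t * emeasure lebesgue E \<le> ennreal t * (K * S)" using EKS by (rule mult_left_mono) simp
  also have "\<dots> = K * (ennreal t * S)" by (simp add: ac_simps)
  also have "\<dots> \<le> K * (\<integral>\<^sup>+ x. ennreal \<bar>g x\<bar> \<partial>lebesgue)" using tS by (rule mult_left_mono) simp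
  finally have fin: "ennreal t * emeasure lebesgue E \<le> K * (\<integral>\<^sup>+ x. ennreal \<bar>g x\<bar> \<partial>lebesgue)" .
  show ?thesis
  proof (rule bexI[OF _ Esets], rule conjI)
    show "{x. ennreal t < maximal_fn g x} \<subseteq> E" using cov unfolding E_def .
    show "ennreal t * emeasure lebesgue E \<le> ennreal ((5 * real DIM('a)) ^ DIM('a)) * (\<integral>\<^sup>+ x. ennreal \<bar>g x\<bar> \<partial>lebesgue)"
      using fin unfolding K_def n_def .
  qed
qed



lemma ennpowr_measurable[measurable]:
  assumes [measurable]: "u \<in> borel_measurable M"
  shows "(\<lambda>x. ennpowr (u x) p) \<in> borel_measurable M"
  unfolding ennpowr_def by measurable

lemma ennpowr_pos: "c > 0 \<Longrightarrow> p > 0 \<Longrightarrow> ennpowr c p > 0"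
  unfolding ennpowr_def
  by (cases c) (auto simp: enn2real_eq_0_iff)

lemma ennpowr_top: "ennpowr \<infinity> p = \<infinity>"
  unfolding ennpowr_def by simp

lemma MLp_lower:
  fixes w :: "'a::euclidean_space \<Rightarrow> real"
  assumes w: "weight w" and winf: "(\<integral>\<^sup>+ x. ennreal (w x) \<partial>lebesgue) = \<infinity>"
    and c: "c > 0" and p: "p > 0" and lb: "\<And>x. c \<le> maximal_fn g x"
  shows "MLp_integral p w g = \<infinity>"
proof -
  have cp: "ennpowr c p \<noteq> 0" using ennpowr_pos[OF c p] by simp
  have "ennpowr c p * (\<integral>\<^sup>+ x. ennreal (w x) \<partial>lebesgue) = (\<integral>\<^sup>+ x. ennpowr c p * ennreal (w x) \<partial>lebesgue)"
    using weight_meas[OF w] by (intro nn_integral_cmult[symmetric]) simp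
  also have "\<dots> \<le> MLp_integral p w g"
    unfolding MLp_integral_def
  proof (intro nn_integral_mono mult_right_mono)
    fix x show "ennpowr c p \<le> ennpowr (maximal_fn g x) p" using lb p by (rule ennpowr_mono)
  qed simp
  finally show ?thesis using winf cp by (simp add: top_unique)
qed

lemma local_int:
  fixes w :: "'a::euclidean_space \<Rightarrow> real"
  assumes w: "weight w" and winf: "(\<integral>\<^sup>+ x. ennreal (w x) \<partial>lebesgue) = \<infinity>" and p: "p > 0"
    and fin: "MLp_integral p w g < \<infinity>" and s: "s \<ge> 0"
  shows "(\<integral>\<^sup>+ y. ennreal \<bar>g y\<bar> * indicator (cbox (- s *\<^sub>R One) (s *\<^sub>R One)) y \<partial>lebesgue) < \<infinity>"
proof (rule ccontr)
  assume "\<not> ?thesis"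
  then have inf: "(\<integral>\<^sup>+ y. ennreal \<bar>g y\<bar> * indicator (cbox (- s *\<^sub>R One) (s *\<^sub>R One)) y \<partial>lebesgue) = \<infinity>"
    using not_less top_unique by fastforce
  have "\<infinity> \<le> maximal_fn g x" for x
  proof -
    define u where "u = s + (\<Sum>b\<in>Basis. \<bar>x \<bullet> b\<bar>) + 1"
    have snn: "0 \<le> (\<Sum>b\<in>Basis. \<bar>x \<bullet> b\<bar>)" by (intro sum_nonneg) simp
    have u: "u > 0" "u \<ge> s" unfolding u_def using s snn by linarith+
    define a where "a = - (u *\<^sub>R (One::'a))"
    have ia: "a \<bullet> b = - u" "(a + (2 * u) *\<^sub>R One) \<bullet> b = u" if "b \<in> Basis" for b
      using that unfolding a_def by (simp_all add: inner_add_left inner_diff_left)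
    have is1: "(- (s *\<^sub>R One)) \<bullet> b = - s" "(s *\<^sub>R One) \<bullet> b = s" if "b \<in> Basis" for b :: 'a
      using that by simp_all
    have sub: "cbox (- (s *\<^sub>R One)) (s *\<^sub>R One) \<subseteq> cbox a (a + (2 * u) *\<^sub>R One)"
      unfolding subset_box(1) using u ia is1 by simp
    have xin: "x \<in> cbox a (a + (2 * u) *\<^sub>R One)"
      unfolding mem_box
    proof
      fix b :: 'a assume b: "b \<in> Basis"
      have "\<bar>x \<bullet> b\<bar> \<le> (\<Sum>b\<in>Basis. \<bar>x \<bullet> b\<bar>)" using b by (intro member_le_sum) auto
      then have "\<bar>x \<bullet> b\<bar> \<le> u" unfolding u_def using s by simp
      then show "a \<bullet> b \<le> x \<bullet> b \<and> x \<bullet> b \<le> (a + (2 * u) *\<^sub>R One) \<bullet> b" using ia[OF b] by (simp add: abs_le_iff)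
    qed
    have "\<infinity> \<le> (\<integral>\<^sup>+ y\<in>cbox a (a + (2 * u) *\<^sub>R One). ennreal \<bar>g y\<bar> \<partial>lebesgue)"
      unfolding inf[symmetric] using sub by (intro nn_integral_mono) (simp add: indicator_def subset_iff)
    then have "(\<integral>\<^sup>+ y\<in>cbox a (a + (2 * u) *\<^sub>R One). ennreal \<bar>g y\<bar> \<partial>lebesgue) = \<infinity>" by (simp add: top_unique)
    then have "\<infinity> = (\<integral>\<^sup>+ y\<in>cbox a (a + (2 * u) *\<^sub>R One). ennreal \<bar>g y\<bar> \<partial>lebesgue) / ennreal ((2 * u) ^ DIM('a))"
      by (simp add: ennreal_top_divide)
    also have "\<dots> \<le> maximal_fn g x" using u xin by (intro maximal_fn_ge) auto
    finally show ?thesis .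
  qed
  then have "top \<le> maximal_fn g x" for x by (simp add: infinity_ennreal_def)
  then have "MLp_integral p w g = \<infinity>" by (rule MLp_lower[OF w winf ennreal_zero_less_top p])
  then show False using fin by simp
qed


lemma large_cubes:
  fixes w :: "'a::euclidean_space \<Rightarrow> real" and g :: "'a \<Rightarrow> real"
  assumes w: "weight w" and winf: "(\<integral>\<^sup>+ x. ennreal (w x) \<partial>lebesgue) = \<infinity>" and p: "p > 0"
    and fin: "MLp_integral p w g < \<infinity>" and e: "\<epsilon> > 0"
  shows "\<exists>R>0. \<forall>a r. R \<le> r \<longrightarrow> x \<in> cbox a (a + r *\<^sub>R One) \<longrightarrow>
     (\<integral>\<^sup>+ y\<in>cbox a (a + r *\<^sub>R One). ennreal \<bar>g y\<bar> \<partial>lebesgue) \<le> ennreal \<epsilon> * ennreal (r ^ DIM('a))"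
proof (rule ccontr)
  assume "\<not> ?thesis"
  then have bad: "\<And>R. R > 0 \<Longrightarrow> \<exists>a r. R \<le> r \<and> x \<in> cbox a (a + r *\<^sub>R One) \<and>
     ennreal \<epsilon> * ennreal (r ^ DIM('a)) < (\<integral>\<^sup>+ y\<in>cbox a (a + r *\<^sub>R One). ennreal \<bar>g y\<bar> \<partial>lebesgue)"
    by (simp add: not_le)
  have lb: "ennreal (\<epsilon> / 3 ^ DIM('a)) \<le> maximal_fn g y" for y
  proof -
    define R where "R = (\<Sum>b\<in>Basis. \<bar>(x - y) \<bullet> b\<bar>) + 1"
    have snn: "0 \<le> (\<Sum>b\<in>Basis. \<bar>(x - y) \<bullet> b\<bar>)" by (intro sum_nonneg) simp
    have R: "R > 0" unfolding R_def using snn by linarith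
    obtain a r where ar: "R \<le> r" "x \<in> cbox a (a + r *\<^sub>R One)"
      "ennreal \<epsilon> * ennreal (r ^ DIM('a)) < (\<integral>\<^sup>+ y\<in>cbox a (a + r *\<^sub>R One). ennreal \<bar>g y\<bar> \<partial>lebesgue)"
      using bad[OF R] by blast
    have r: "r > 0" using R ar(1) by linarith
    have "dist x y \<le> (\<Sum>b\<in>Basis. \<bar>(x - y) \<bullet> b\<bar>)" unfolding dist_norm by (rule norm_le_l1)
    then have dxy: "dist x y < r" using ar(1) unfolding R_def by linarith
    define Q' where "Q' = cbox (a - r *\<^sub>R One) (a - r *\<^sub>R One + (r + 2 * r) *\<^sub>R One)"
    have sub: "cbox a (a + r *\<^sub>R One) \<subseteq> Q'" unfolding Q'_def using r by (intro cube_enlarge_sub) simp_all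
    have yin: "y \<in> Q'" unfolding Q'_def using ar(2) dxy by (rule cube_enlarge_mem)
    define m where "m = ennreal ((r + 2 * r) ^ DIM('a))"
    have m: "m \<noteq> 0" "m \<noteq> top" using r unfolding m_def by simp_all
    have "ennreal (\<epsilon> / 3 ^ DIM('a)) * m = ennreal (\<epsilon> / 3 ^ DIM('a) * (r + 2 * r) ^ DIM('a))"
      unfolding m_def by (rule ennreal_mult[symmetric]) (use e r in simp_all)
    also have "\<epsilon> / 3 ^ DIM('a) * (r + 2 * r) ^ DIM('a) = \<epsilon> * r ^ DIM('a)"
    proof -
      have "r + 2 * r = 3 * r" by simp
      then have "(r + 2 * r) ^ DIM('a) = 3 ^ DIM('a) * r ^ DIM('a)"
        by (simp only: power_mult_distrib)
      then show ?thesis by simp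
    qed
    also have "ennreal (\<epsilon> * r ^ DIM('a)) = ennreal \<epsilon> * ennreal (r ^ DIM('a))"
      using e r by (intro ennreal_mult) simp_all
    also have "\<dots> \<le> (\<integral>\<^sup>+ y\<in>cbox a (a + r *\<^sub>R One). ennreal \<bar>g y\<bar> \<partial>lebesgue)" using ar(3) by simp
    also have "\<dots> \<le> (\<integral>\<^sup>+ y\<in>Q'. ennreal \<bar>g y\<bar> \<partial>lebesgue)"
      using sub by (intro nn_integral_mono) (simp add: indicator_def subset_iff)
    finally have "ennreal (\<epsilon> / 3 ^ DIM('a)) * m / m \<le> (\<integral>\<^sup>+ y\<in>Q'. ennreal \<bar>g y\<bar> \<partial>lebesgue) / m"
      by (rule divide_right_mono_ennreal)
    moreover have "ennreal (\<epsilon> / 3 ^ DIM('a)) * m / m = ennreal (\<epsilon> / 3 ^ DIM('a))"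
      using m by (rule mult_divide_eq_ennreal)
    moreover have "(\<integral>\<^sup>+ y\<in>Q'. ennreal \<bar>g y\<bar> \<partial>lebesgue) / m \<le> maximal_fn g y"
      unfolding Q'_def m_def using r yin unfolding Q'_def by (intro maximal_fn_ge) simp_all
    ultimately show ?thesis by simp
  qed
  have "MLp_integral p w g = \<infinity>"
    by (rule MLp_lower[OF w winf _ p lb]) (use e in simp)
  then show False using fin by simp
qed



lemma hard_direction:
  fixes p :: real and w :: "'a::euclidean_space \<Rightarrow> real"
  assumes p: "p > 1" and w: "weight w"
    and nint: "\<not> integrable lebesgue w"
  shows "MLp_order_continuous p w"
  unfolding MLp_order_continuous_def
proof (intro allI impI)
  fix f :: "nat \<Rightarrow> 'a \<Rightarrow> real"
  assume space: "\<forall>j. f j \<in> MLp_space p w"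
    and mono: "\<forall>j. AE x in lebesgue. \<bar>f (Suc j) x\<bar> \<le> \<bar>f j x\<bar>"
    and lim: "AE x in lebesgue. (\<lambda>j. f j x) \<longlonglongrightarrow> 0"
  have p0: "p > 0" using p by simp
  have wm: "w \<in> borel_measurable lebesgue" using w by (rule weight_meas)
  have winf: "(\<integral>\<^sup>+ x. ennreal (w x) \<partial>lebesgue) = \<infinity>"
  proof -
    have "\<not> (\<integral>\<^sup>+ x. ennreal (norm (w x)) \<partial>lebesgue) < \<infinity>" using nint wm by (simp add: integrable_iff_bounded)
    moreover have "(\<integral>\<^sup>+ x. ennreal (norm (w x)) \<partial>lebesgue) = (\<integral>\<^sup>+ x. ennreal (w x) \<partial>lebesgue)"
      using weight_nonneg[OF w] by simp
    ultimately have "\<not> (\<integral>\<^sup>+ x. ennreal (w x) \<partial>lebesgue) < top" by (simp add: infinity_ennreal_def)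
    then have "(\<integral>\<^sup>+ x. ennreal (w x) \<partial>lebesgue) = top" using not_less top_unique by fastforce
    then show ?thesis by (simp add: infinity_ennreal_def)
  qed
  have fmeas: "f j \<in> borel_measurable lebesgue" for j using space by (simp add: MLp_space_def)
  have ffin: "MLp_integral p w (f j) < \<infinity>" for j using space by (simp add: MLp_space_def)
  have AEall: "AE x in lebesgue. \<forall>j. \<bar>f (Suc j) x\<bar> \<le> \<bar>f j x\<bar>" using mono by (simp add: AE_all_countable)
  have AE0: "AE x in lebesgue. \<forall>j. \<bar>f j x\<bar> \<le> \<bar>f 0 x\<bar>"
    using AEall
  proof eventually_elim
    case (elim x)
    show ?case
    proof
      fix j show "\<bar>f j x\<bar> \<le> \<bar>f 0 x\<bar>"
      proof (induction j)
        case (Suc j)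
        then show ?case using elim[rule_format, of j] by linarith
      qed simp
    qed
  qed
  define M where "M j x = maximal_fn (f j) x" for j x
  have Mdec: "M (Suc j) x \<le> M j x" for j x
    unfolding M_def using mono by (intro maximal_fn_mono) simp
  have Mle0: "M j x \<le> M 0 x" for j x
  proof -
    have "AE y in lebesgue. \<bar>f j y\<bar> \<le> \<bar>f 0 y\<bar>" using AE0 by eventually_elim simp
    then show ?thesis unfolding M_def by (rule maximal_fn_mono)
  qed
  define Bx where "Bx m = cbox (- (2 * real m) *\<^sub>R One) ((2 * real m) *\<^sub>R (One::'a))" for m :: nat
  have Bsets: "Bx m \<in> sets lebesgue" for m unfolding Bx_def by (rule borel_measurable_cbox_lebesgue)
  define g where "g j m y = f j y * indicator (Bx m) y" for j m y
  define h where "h m j y = ennreal (\<bar>f j y\<bar> * indicator (Bx m) y)" for m j y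
  have gabs: "ennreal \<bar>g j m y\<bar> = h m j y" for j m y
    unfolding g_def h_def by (simp add: abs_mult)
  have gmeas: "g j m \<in> borel_measurable lebesgue" for j m
    unfolding g_def using fmeas Bsets by measurable
  have hmeas: "h m j \<in> borel_measurable lebesgue" for j m
    unfolding h_def using fmeas Bsets by measurable
  have hlim: "(\<lambda>j. \<integral>\<^sup>+ y. h m j y \<partial>lebesgue) \<longlonglongrightarrow> 0" for m
  proof -
    have hdec: "AE y in lebesgue. h m (Suc j) y \<le> h m j y" for j
      using mono[rule_format, of j] by eventually_elim (simp add: h_def indicator_def ennreal_leI)
    have "(\<integral>\<^sup>+ y. h m 0 y \<partial>lebesgue) = (\<integral>\<^sup>+ y. ennreal \<bar>f 0 y\<bar> * indicator (cbox (- (2 * real m) *\<^sub>R One) ((2 * real m) *\<^sub>R One)) y \<partial>lebesgue)"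
      unfolding h_def Bx_def by (intro nn_integral_cong) (simp add: indicator_def)
    also have "\<dots> < \<infinity>" using w winf p0 ffin[of 0] by (intro local_int) simp_all
    finally have h0: "(\<integral>\<^sup>+ y. h m 0 y \<partial>lebesgue) < \<infinity>" .
    have eq: "(\<integral>\<^sup>+ y. (INF j. h m j y) \<partial>lebesgue) = (INF j. \<integral>\<^sup>+ y. h m j y \<partial>lebesgue)"
      using hdec hmeas h0 by (rule nn_integral_monotone_convergence_INF_AE')
    have "AE y in lebesgue. (INF j. h m j y) = 0"
      using lim
    proof eventually_elim
      case (elim y)
      have "(\<lambda>j. \<bar>f j y\<bar> * indicator (Bx m) y) \<longlonglongrightarrow> 0 * indicator (Bx m) y"
        by (intro tendsto_mult tendsto_rabs_zero elim tendsto_const)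
      then have "(\<lambda>j. h m j y) \<longlonglongrightarrow> ennreal 0" unfolding h_def by (intro tendsto_ennrealI) simp
      moreover have "\<exists>N. \<forall>n\<ge>N. (INF j. h m j y) \<le> h m n y" by (auto intro: INF_lower)
      ultimately have "(INF j. h m j y) \<le> ennreal 0" by (rule LIMSEQ_le_const)
      then show ?case by simp
    qed
    moreover have "(\<lambda>y. INF j. h m j y) \<in> borel_measurable lebesgue" using hmeas by measurable
    ultimately have "(\<integral>\<^sup>+ y. (INF j. h m j y) \<partial>lebesgue) = 0" by (simp add: nn_integral_0_iff_AE)
    then have INF0: "(INF j. \<integral>\<^sup>+ y. h m j y \<partial>lebesgue) = 0" using eq by simp
    have "antimono (\<lambda>j. \<integral>\<^sup>+ y. h m j y \<partial>lebesgue)"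
      using hdec by (intro decseq_SucI nn_integral_mono_AE)
    then have "(\<lambda>j. \<integral>\<^sup>+ y. h m j y \<partial>lebesgue) \<longlonglongrightarrow> (INF j. \<integral>\<^sup>+ y. h m j y \<partial>lebesgue)"
      by (rule LIMSEQ_INF)
    then show ?thesis using INF0 by simp
  qed
  define K where "K = ennreal ((5 * real DIM('a)) ^ DIM('a))"
  define t where "t k = inverse (real (Suc k))" for k :: nat
  have tpos: "t k > 0" for k unfolding t_def by simp
  define P where "P j m k E \<longleftrightarrow> E \<in> sets lebesgue \<and> {x. ennreal (t k) < maximal_fn (g j m) x} \<subseteq> E \<and>
      ennreal (t k) * emeasure lebesgue E \<le> K * (\<integral>\<^sup>+ y. h m j y \<partial>lebesgue)" for j m k E
  have exP: "\<exists>E. P j m k E" for j m k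
  proof -
    have "\<exists>E\<in>sets lebesgue. {x. ennreal (t k) < maximal_fn (g j m) x} \<subseteq> E \<and>
      ennreal (t k) * emeasure lebesgue E \<le> ennreal ((5 * real DIM('a)) ^ DIM('a)) * (\<integral>\<^sup>+ x. ennreal \<bar>g j m x\<bar> \<partial>lebesgue)"
      by (rule weak_type[OF gmeas tpos])
    then obtain E where E1: "E \<in> sets lebesgue" and E2: "{x. ennreal (t k) < maximal_fn (g j m) x} \<subseteq> E \<and>
      ennreal (t k) * emeasure lebesgue E \<le> ennreal ((5 * real DIM('a)) ^ DIM('a)) * (\<integral>\<^sup>+ x. ennreal \<bar>g j m x\<bar> \<partial>lebesgue)"
      by (rule bexE)
    have "P j m k E" unfolding P_def K_def using E1 E2 unfolding gabs by (intro conjI) (simp_all only:)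
    then show ?thesis by (rule exI)
  qed
  define E where "E j m k = (SOME E. P j m k E)" for j m k
  have PE: "P j m k (E j m k)" for j m k unfolding E_def using exP by (rule someI_ex)
  have Esets: "E j m k \<in> sets lebesgue" for j m k using PE unfolding P_def by blast
  have Esub: "{x. ennreal (t k) < maximal_fn (g j m) x} \<subseteq> E j m k" for j m k using PE unfolding P_def by blast
  have Emeas: "ennreal (t k) * emeasure lebesgue (E j m k) \<le> K * (\<integral>\<^sup>+ y. h m j y \<partial>lebesgue)" for j m k
    using PE unfolding P_def by blast
  define N where "N = (\<Union>m. \<Union>k. \<Inter>j. E j m k)"
  have Ampnull: "(\<Inter>j. E j m k) \<in> null_sets lebesgue" for m k
  proof -
    have Asets: "(\<Inter>j. E j m k) \<in> sets lebesgue" using Esets by (intro sets.countable_INT'') auto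
    have "(\<lambda>j. K * (\<integral>\<^sup>+ y. h m j y \<partial>lebesgue)) \<longlonglongrightarrow> K * 0"
      unfolding K_def by (intro ennreal_tendsto_cmult hlim) simp
    moreover have "\<exists>N. \<forall>n\<ge>N. ennreal (t k) * emeasure lebesgue (\<Inter>j. E j m k) \<le> K * (\<integral>\<^sup>+ y. h m n y \<partial>lebesgue)"
    proof (intro exI allI impI)
      fix n :: nat
      have "emeasure lebesgue (\<Inter>j. E j m k) \<le> emeasure lebesgue (E n m k)"
        using Esets by (intro emeasure_mono) auto
      then have "ennreal (t k) * emeasure lebesgue (\<Inter>j. E j m k) \<le> ennreal (t k) * emeasure lebesgue (E n m k)"
        by (rule mult_left_mono) simp
      also have "\<dots> \<le> K * (\<integral>\<^sup>+ y. h m n y \<partial>lebesgue)" by (rule Emeas)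
      finally show "ennreal (t k) * emeasure lebesgue (\<Inter>j. E j m k) \<le> K * (\<integral>\<^sup>+ y. h m n y \<partial>lebesgue)" .
    qed
    ultimately have "ennreal (t k) * emeasure lebesgue (\<Inter>j. E j m k) \<le> K * 0" by (rule LIMSEQ_le_const)
    then have "emeasure lebesgue (\<Inter>j. E j m k) = 0" using tpos[of k] by simp
    then show ?thesis using Asets by (simp add: null_sets_def)
  qed
  have Nnull: "N \<in> null_sets lebesgue" unfolding N_def using Ampnull by (intro null_sets_UN) auto
  have Mzero: "(INF j. M j x) = 0" if xN: "x \<notin> N" for x
  proof -
    have "(INF j. M j x) \<le> 0"
    proof (rule ennreal_le_epsilon)
      fix e :: real assume e: "e > 0"
      obtain R where R: "R > 0" and Rp: "\<And>a r. R \<le> r \<Longrightarrow> x \<in> cbox a (a + r *\<^sub>R One) \<Longrightarrow>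
         (\<integral>\<^sup>+ y\<in>cbox a (a + r *\<^sub>R One). ennreal \<bar>f 0 y\<bar> \<partial>lebesgue) \<le> ennreal e * ennreal (r ^ DIM('a))"
        using large_cubes[OF w winf p0 ffin[of 0] e, of x] by blast
      define S where "S = (\<Sum>b\<in>Basis. \<bar>x \<bullet> b\<bar>)"
      obtain m :: nat where m: "max R S \<le> real m" using real_arch_simple by blast
      obtain n :: nat where n: "n > 0" "inverse (real n) < e" using ex_inverse_of_nat_less[OF e] by blast
      define k where "k = n - 1"
      have tk: "t k < e" unfolding t_def k_def using n by simp
      have "x \<notin> (\<Inter>j. E j m k)" using xN unfolding N_def by blast
      then obtain j where j: "x \<notin> E j m k" by blast
      then have "\<not> ennreal (t k) < maximal_fn (g j m) x" using Esub[of k j m] by blast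
      then have Mg: "maximal_fn (g j m) x \<le> ennreal (t k)" by (simp only: not_less)
      have "M j x \<le> ennreal e"
        unfolding M_def
      proof (rule maximal_fn_le)
        fix a :: 'a and r :: real assume r: "r > 0" and xQ: "x \<in> cbox a (a + r *\<^sub>R One)"
        define Q where "Q = cbox a (a + r *\<^sub>R One)"
        define I where "I = (\<integral>\<^sup>+ y\<in>Q. ennreal \<bar>f j y\<bar> \<partial>lebesgue)"
        have mr: "ennreal (r ^ DIM('a)) \<noteq> 0" "ennreal (r ^ DIM('a)) \<noteq> top" using r by simp_all
        have key: "I / ennreal (r ^ DIM('a)) \<le> ennreal e"
        proof (cases "real m \<le> r")
          case True
          have "AE y in lebesgue. ennreal \<bar>f j y\<bar> * indicator Q y \<le> ennreal \<bar>f 0 y\<bar> * indicator Q y"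
            using AE0 by eventually_elim (simp add: indicator_def ennreal_leI)
          then have "I \<le> (\<integral>\<^sup>+ y\<in>Q. ennreal \<bar>f 0 y\<bar> \<partial>lebesgue)"
            unfolding I_def by (rule nn_integral_mono_AE)
          also have "\<dots> \<le> ennreal e * ennreal (r ^ DIM('a))"
            unfolding Q_def using True m xQ by (intro Rp) auto
          finally have "I / ennreal (r ^ DIM('a)) \<le> ennreal e * ennreal (r ^ DIM('a)) / ennreal (r ^ DIM('a))"
            by (rule divide_right_mono_ennreal)
          also have "\<dots> = ennreal e" using mr by (rule mult_divide_eq_ennreal)
          finally show ?thesis .
        next
          case False
          have QB: "Q \<subseteq> Bx m"
            unfolding Q_def Bx_def subset_box(1)
          proof (intro impI ballI)
            fix b :: 'a assume b: "b \<in> Basis"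
            have "\<bar>x \<bullet> b\<bar> \<le> S" unfolding S_def using b by (intro member_le_sum) auto
            moreover have "a \<bullet> b \<le> x \<bullet> b" "x \<bullet> b \<le> a \<bullet> b + r" using xQ b by (auto simp: mem_box inner_add_left)
            moreover have "(- (2 * real m) *\<^sub>R One) \<bullet> b = - (2 * real m)" "((2 * real m) *\<^sub>R One) \<bullet> b = 2 * real m"
              "(a + r *\<^sub>R One) \<bullet> b = a \<bullet> b + r" using b by (simp_all add: inner_add_left)
            ultimately show "(- (2 * real m) *\<^sub>R One) \<bullet> b \<le> a \<bullet> b \<and> (a + r *\<^sub>R One) \<bullet> b \<le> ((2 * real m) *\<^sub>R One) \<bullet> b"
              using False m by (simp add: abs_le_iff)
          qed
          have "I = (\<integral>\<^sup>+ y\<in>Q. ennreal \<bar>g j m y\<bar> \<partial>lebesgue)"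
            unfolding I_def g_def using QB by (intro nn_integral_cong) (auto simp: indicator_def)
          then have "I / ennreal (r ^ DIM('a)) \<le> maximal_fn (g j m) x"
            unfolding Q_def using r xQ by (simp add: maximal_fn_ge)
          also have "\<dots> \<le> ennreal (t k)" by (rule Mg)
          also have "\<dots> \<le> ennreal e" using tk by (simp add: ennreal_leI)
          finally show ?thesis .
        qed
        then show "(\<integral>\<^sup>+ y\<in>cbox a (a + r *\<^sub>R One). ennreal \<bar>f j y\<bar> \<partial>lebesgue) / ennreal (r ^ DIM('a)) \<le> ennreal e"
          unfolding I_def Q_def .
      qed
      then have "(INF j. M j x) \<le> ennreal e" by (rule order.trans[OF INF_lower[OF UNIV_I]])
      then show "(INF j. M j x) \<le> 0 + ennreal e" by simp
    qed
    then show ?thesis by simp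
  qed
  define F where "F j x = ennpowr (M j x) p * ennreal (w x)" for j x
  have Fmeas: "F j \<in> borel_measurable lebesgue" for j
  proof -
    have m1: "(\<lambda>x. ennpowr (maximal_fn (f j) x) p) \<in> borel_measurable lebesgue"
      by (rule ennpowr_measurable[OF maximal_fn_measurable])
    have m2: "(\<lambda>x. ennreal (w x)) \<in> borel_measurable lebesgue" using wm by measurable
    show ?thesis unfolding F_def M_def using m1 m2 by (rule borel_measurable_times_ennreal)
  qed
  have Fdec: "AE x in lebesgue. F (Suc j) x \<le> F j x" for j
  proof (rule AE_I2)
    fix x
    have "ennpowr (M (Suc j) x) p \<le> ennpowr (M j x) p" using Mdec p0 by (rule ennpowr_mono)
    then show "F (Suc j) x \<le> F j x" unfolding F_def by (rule mult_right_mono) simp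
  qed
  have Fint: "(\<integral>\<^sup>+ x. F j x \<partial>lebesgue) = MLp_integral p w (f j)" for j
    unfolding F_def M_def MLp_integral_def by simp
  have F0fin: "(\<integral>\<^sup>+ x. F 0 x \<partial>lebesgue) < \<infinity>" using ffin[of 0] Fint[of 0] by simp
  have FINF: "AE x in lebesgue. (INF j. F j x) = 0"
    using AE_not_in[OF Nnull]
  proof eventually_elim
    case (elim x)
    have M0: "(INF j. M j x) = 0" using elim by (rule Mzero)
    have "(INF j. F j x) \<le> 0"
    proof (rule ennreal_le_epsilon)
      fix e :: real assume e: "e > 0"
      have w0: "w x \<ge> 0" using w by (rule weight_nonneg)
      define d where "d = (e / (w x + 1)) powr (1/p)"
      have ew: "e / (w x + 1) > 0" using e w0 by simp
      have "e / (w x + 1) \<noteq> 0" using ew by linarith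
      have d: "d > 0" unfolding d_def using e w0 by simp
      have dp: "d powr p = e / (w x + 1)"
        unfolding d_def using ew p0 e w0 by (simp add: powr_powr)
      have "(INF j. M j x) < ennreal d" using M0 d by simp
      then obtain j where j: "M j x < ennreal d" by (auto simp: INF_less_iff)
      have "F j x \<le> ennpowr (ennreal d) p * ennreal (w x)"
        unfolding F_def using j p0 by (intro mult_right_mono ennpowr_mono) simp_all
      also have "\<dots> = ennreal (d powr p * w x)"
        using d w0 by (simp add: ennpowr_ennreal ennreal_mult)
      also have "d powr p * w x \<le> e"
      proof -
        have "d powr p * w x = e * (w x / (w x + 1))" unfolding dp by simp
        also have "\<dots> \<le> e * 1" using e w0 by (intro mult_left_mono) simp_all
        finally show ?thesis by simp
      qed
      then have "ennreal (d powr p * w x) \<le> ennreal e" by (rule ennreal_leI)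
      finally have "F j x \<le> ennreal e" .
      then have "(INF j. F j x) \<le> ennreal e" by (rule order.trans[OF INF_lower[OF UNIV_I]])
      then show "(INF j. F j x) \<le> 0 + ennreal e" by simp
    qed
    then show ?case by simp
  qed
  have eqF: "(\<integral>\<^sup>+ x. (INF j. F j x) \<partial>lebesgue) = (INF j. \<integral>\<^sup>+ x. F j x \<partial>lebesgue)"
    using Fdec Fmeas F0fin by (rule nn_integral_monotone_convergence_INF_AE')
  have "(\<lambda>x. INF j. F j x) \<in> borel_measurable lebesgue" using Fmeas by measurable
  then have "(\<integral>\<^sup>+ x. (INF j. F j x) \<partial>lebesgue) = 0" using FINF by (simp add: nn_integral_0_iff_AE)
  then have INF0: "(INF j. \<integral>\<^sup>+ x. F j x \<partial>lebesgue) = 0" using eqF by simp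
  have "antimono (\<lambda>j. \<integral>\<^sup>+ x. F j x \<partial>lebesgue)"
    using Fdec by (intro decseq_SucI nn_integral_mono_AE)
  then have "(\<lambda>j. \<integral>\<^sup>+ x. F j x \<partial>lebesgue) \<longlonglongrightarrow> (INF j. \<integral>\<^sup>+ x. F j x \<partial>lebesgue)"
    by (rule LIMSEQ_INF)
  then have "(\<lambda>j. MLp_integral p w (f j)) \<longlonglongrightarrow> ennreal 0" using INF0 Fint by simp
  then have "(\<lambda>j. enn2real (MLp_integral p w (f j))) \<longlonglongrightarrow> 0" by (rule tendsto_enn2real) simp
  then have "(\<lambda>j. enn2real (MLp_integral p w (f j)) powr (1 / p)) \<longlonglongrightarrow> 0"
    by (rule tendsto_zero_powrI[OF _ tendsto_const]) (use p0 in simp_all)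
  then show "(\<lambda>j. MLp_norm p w (f j)) \<longlonglongrightarrow> 0" unfolding MLp_norm_def .
qed


theorem lemma3p5:
  fixes p :: real and w :: "'a::euclidean_space \<Rightarrow> real"
  assumes "p > 1"
    and "w \<in> Np_class p"
    and "emeasure lebesgue {x. w x > 0} > 0"
  shows "MLp_order_continuous p w \<longleftrightarrow> \<not> integrable lebesgue w"
proof -
  have w: "weight w" using assms(2) unfolding Np_class_def by simp
  show ?thesis
  proof
    assume oc: "MLp_order_continuous p w"
    show "\<not> integrable lebesgue w"
    proof
      assume "integrable lebesgue w"
      then have "\<not> MLp_order_continuous p w" using assms(1) w assms(3) by (intro easy_direction)
      then show False using oc by simp
    qed
  next
    assume "\<not> integrable lebesgue w"
    then show "MLp_order_continuous p w" using assms(1) w by (intro hard_direction)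
  qed
qed

end
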